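(* Let $r\geq 1$ and $d>r$ be integers and let $A_1,\dots,A_r$ be fixed positive integers. For each $i$ let $H^{(i)}$ be any one of the sequences (indexed by positive integers $n$) $A_i^{n}n!$, $A_i^{n}n!!$, $A_i^{n}[1,\dots,n]$, $A_i^{n}\,n\#$, or $A_i^{p_n}\,p_n\#$ (the choice may depend on $i$). Then the equation $$x^d=\prod_{i=1}^r H^{(i)}_{n_i}$$ has only finitely many solutions $(x,n_1,\dots,n_r)$ with $x\in\mathbb{Z}$ and $n_1,\dots,n_r$ positive integers.
   Context: $[1,\dots,n]$ is the least common multiple of $1,\dots,n$; $n!!$ is the double factorial; $n\#$ is the product of all primes $\leq n$; $p_n$ is the $n$-th prime and $p_n\#$ is the product of the first $n$ primes. *)

theory Defs
  imports Main "HOL-Computational_Algebra.Primes" "HOL-Library.Infinite_Set"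
begin

fun dfact :: "nat \<Rightarrow> nat" where
  "dfact 0 = 1"
| "dfact (Suc 0) = 1"
| "dfact (Suc (Suc n)) = Suc (Suc n) * dfact n"

definition lcm_upto :: "nat \<Rightarrow> nat" where
  "lcm_upto n = Lcm {1..n}"

definition primorial :: "nat \<Rightarrow> nat" where
  "primorial n = (\<Prod>p\<in>{p. prime p \<and> p \<le> n}. p)"

(* p_n = the n-th prime, 1-indexed: p_1 = 2 *)
definition nth_prime :: "nat \<Rightarrow> nat" where
  "nth_prime n = enumerate {p::nat. prime p} (n - 1)"

datatype seq_kind = Fact | DFact | LcmSeq | Primorial | PrimePrimorial

fun Hseq :: "seq_kind \<Rightarrow> nat \<Rightarrow> nat \<Rightarrow> nat" where
  "Hseq Fact A n = A ^ n * fact n"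
| "Hseq DFact A n = A ^ n * dfact n"
| "Hseq LcmSeq A n = A ^ n * lcm_upto n"
| "Hseq Primorial A n = A ^ n * primorial n"
| "Hseq PrimePrimorial A n = A ^ (nth_prime n) * primorial (nth_prime n)"

end

theory Submission
  imports Defs HOL.Binomial_Plus "HOL-Real_Asymp.Real_Asymp"
begin


lemma mult_le_self: "prime (p::nat) \<Longrightarrow> m > 0 \<Longrightarrow> multiplicity p m \<le> m"
proof -
  assume p: "prime p" and m: "m > 0"
  have "p ^ multiplicity p m dvd m" by (rule multiplicity_dvd)
  hence "p ^ multiplicity p m \<le> m" using m by (rule dvd_imp_le)
  moreover have "multiplicity p m < 2 ^ multiplicity p m" by (rule less_exp)
  moreover have "2 ^ multiplicity p m \<le> p ^ multiplicity p m"
    using p prime_ge_2_nat power_mono by blast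
  ultimately show ?thesis by linarith
qed

lemma sum_ind_le: "v \<le> m \<Longrightarrow> (\<Sum>k\<in>{1..m}. if k \<le> v then 1 else 0::nat) = v"
proof (induction m)
  case 0 then show ?case by simp
next
  case (Suc m)
  show ?case
  proof (cases "v = Suc m")
    case True
    then show ?thesis by simp
  next
    case False
    then have "v \<le> m" using Suc.prems by simp
    then show ?thesis using Suc.IH by simp
  qed
qed

lemma mult_as_sum: "prime (p::nat) \<Longrightarrow> m > 0 \<Longrightarrow>
   multiplicity p m = (\<Sum>k\<in>{1..m}. if p ^ k dvd m then 1 else 0)"
proof -
  assume p: "prime p" and m: "m > 0"
  have p1: "\<not> is_unit p" using p by auto
  have m0: "m \<noteq> 0" using m by simp
  have "(\<Sum>k\<in>{1..m}. if p ^ k dvd m then 1 else 0) = (\<Sum>k\<in>{1..m}. if k \<le> multiplicity p m then 1 else 0::nat)"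
    using power_dvd_iff_le_multiplicity[OF m0 p1] by presburger
  also have "\<dots> = multiplicity p m" using sum_ind_le mult_le_self[OF p m] by blast
  finally show ?thesis by simp
qed



lemma div_Suc_ind: "0 < (q::nat) \<Longrightarrow> Suc n div q = n div q + (if q dvd Suc n then 1 else 0)"
  by (simp add: div_Suc mod_eq_0_iff_dvd)

lemma n_less_pow: "1 < (p::nat) \<Longrightarrow> n < p ^ n"
proof -
  assume p1: "1 < p"
  have "n < 2 ^ n" by (rule less_exp)
  also have "(2::nat) ^ n \<le> p ^ n" using p1 by (simp add: power_mono)
  finally show ?thesis .
qed

lemma legendre: "prime (p::nat) \<Longrightarrow> multiplicity p (fact n :: nat) = (\<Sum>k\<in>{1..n}. n div p ^ k)"
proof (induction n)
  case 0
  then show ?case by simp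
next
  case (Suc n)
  have p1: "p > 1" using Suc.prems prime_gt_1_nat by blast
  have "multiplicity p (fact (Suc n) :: nat) = multiplicity p (Suc n * fact n)"
    by (simp add: fact_Suc del: of_nat_Suc)
  also have "\<dots> = multiplicity p (Suc n) + multiplicity p (fact n :: nat)"
    by (rule prime_elem_multiplicity_mult_distrib) (use Suc.prems in auto)
  also have "multiplicity p (Suc n) = (\<Sum>k\<in>{1..Suc n}. if p ^ k dvd Suc n then 1 else 0)"
    using mult_as_sum[OF Suc.prems, of "Suc n"] by simp
  also have "multiplicity p (fact n :: nat) = (\<Sum>k\<in>{1..Suc n}. n div p ^ k)"
  proof -
    have "n < p ^ n" using n_less_pow[OF p1] .
    also have "p ^ n < p ^ Suc n" using p1 by simp
    finally have "n < p ^ Suc n" .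
    hence "n div p ^ Suc n = 0" by simp
    thus ?thesis using Suc.IH Suc.prems by simp
  qed
  also have "(\<Sum>k\<in>{1..Suc n}. if p ^ k dvd Suc n then 1 else 0) + (\<Sum>k\<in>{1..Suc n}. n div p ^ k)
      = (\<Sum>k\<in>{1..Suc n}. Suc n div p ^ k)"
    unfolding sum.distrib[symmetric]
  proof (rule sum.cong)
    fix k assume "k \<in> {1..Suc n}"
    have "0 < p ^ k" using p1 by simp
    from div_Suc_ind[OF this, of n] show "(if p ^ k dvd Suc n then 1 else 0) + n div p ^ k = Suc n div p ^ k"
      by simp
  qed simp
  finally show ?case .
qed



lemma two_div_bounds: "2 * (n div (q::nat)) \<le> 2 * n div q \<and> 2 * n div q \<le> 2 * (n div q) + 1"
proof (cases "q = 0")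
  case True then show ?thesis by simp
next
  case False
  have h: "n = q * (n div q) + n mod q" by simp
  have g: "\<And>a b. 2*(q*a+b) = 2*b + 2*a*(q::nat)" by (simp add: algebra_simps)
  have e: "2 * n = (2 * (n mod q)) + (2 * (n div q)) * q"
  proof -
    have "2 * n = 2 * (q * (n div q) + n mod q)" using h by (metis)
    also have "\<dots> = (2 * (n mod q)) + (2 * (n div q)) * q"
      by (rule g)
    finally show ?thesis .
  qed
  have "2 * n div q = 2 * (n mod q) div q + 2 * (n div q)"
    by (subst e, simp add: False)
  moreover have "2 * (n mod q) div q < 2"
    by (rule less_mult_imp_div_less) (use False in simp)
  ultimately show ?thesis by simp
qed
lemma two_div_bounds1: "2 * (n div (q::nat)) \<le> 2 * n div q" using two_div_bounds by blast
lemma two_div_bounds2: "2 * n div q \<le> 2 * (n div (q::nat)) + 1" using two_div_bounds by blast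

lemma sq_lemma: "2 * n < 3 * (p::nat) \<Longrightarrow> 5 \<le> n \<Longrightarrow> 2 * n < p ^ 2"
proof -
  assume lt: "2 * n < 3 * p" and n5: "5 \<le> n"
  have "(2*n)^2 < (3*p)^2" using lt by (rule power_strict_mono) auto
  hence "4 * n^2 < 9 * p^2" by (simp add: power_mult_distrib)
  moreover have "20 * n \<le> 4 * n^2" using n5 by (simp add: power2_eq_square)
  ultimately have "18 * n < 9 * p^2" by linarith
  thus ?thesis by linarith
qed

lemma legendre_ext: "prime (p::nat) \<Longrightarrow> n \<le> N \<Longrightarrow> multiplicity p (fact n :: nat) = (\<Sum>k\<in>{1..N}. n div p ^ k)"
proof -
  assume p: "prime p" and nN: "n \<le> N"
  have p1: "p > 1" using p prime_gt_1_nat by blast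
  have "(\<Sum>k\<in>{1..N}. n div p ^ k) = (\<Sum>k\<in>{1..n}. n div p ^ k) + (\<Sum>k\<in>{n<..N}. n div p ^ k)"
  proof -
    have "{1..N} = {1..n} \<union> {n<..N}" using nN by auto
    thus ?thesis by (simp add: sum.union_disjoint ivl_disj_int)
  qed
  also have "(\<Sum>k\<in>{n<..N}. n div p ^ k) = 0"
  proof (rule sum.neutral, rule ballI)
    fix k assume "k \<in> {n<..N}"
    hence "n < k" by simp
    have "n < p ^ n" by (rule n_less_pow[OF p1])
    also have "p ^ n < p ^ k" using p1 \<open>n < k\<close> by simp
    finally show "n div p ^ k = 0" by simp
  qed
  finally show ?thesis using legendre[OF p, of n] by simp
qed

lemma binom_mult: "prime (p::nat) \<Longrightarrow>
  multiplicity p (2 * n choose n) = (\<Sum>k\<in>{1..2*n}. 2 * n div p ^ k - 2 * (n div p ^ k))"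
proof -
  assume p: "prime p"
  have eq: "fact n * fact n * (2 * n choose n) = (fact (2 * n) :: nat)"
    using binomial_fact_lemma[of n "2*n"] by simp
  have nz: "(fact n :: nat) \<noteq> 0" "(2 * n choose n) \<noteq> 0" by auto
  have "multiplicity p (fact (2 * n) :: nat) = multiplicity p (fact n :: nat) + multiplicity p (fact n :: nat) + multiplicity p (2 * n choose n)"
    unfolding eq[symmetric] using p nz
    by (simp add: prime_elem_multiplicity_mult_distrib)
  hence "multiplicity p (2 * n choose n) = (\<Sum>k\<in>{1..2*n}. 2 * n div p ^ k) - 2 * (\<Sum>k\<in>{1..2*n}. n div p ^ k)"
    using legendre_ext[OF p, of n "2*n"] legendre_ext[OF p, of "2*n" "2*n"] by simp
  also have "\<dots> = (\<Sum>k\<in>{1..2*n}. 2 * n div p ^ k - 2 * (n div p ^ k))"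
    by (subst sum_subtractf_nat) (auto simp: sum_distrib_left two_div_bounds1)
  finally show ?thesis .
qed

lemma binom_pow_le: "prime (p::nat) \<Longrightarrow> n > 0 \<Longrightarrow> p ^ multiplicity p (2 * n choose n) \<le> 2 * n"
proof (rule ccontr)
  assume p: "prime p" and n: "n > 0" and c: "\<not> p ^ multiplicity p (2 * n choose n) \<le> 2 * n"
  define v where "v = multiplicity p (2 * n choose n)"
  have p1: "p > 1" using p prime_gt_1_nat by blast
  have big: "2 * n < p ^ v" using c v_def by simp
  have "v = (\<Sum>k\<in>{1..2*n}. 2 * n div p ^ k - 2 * (n div p ^ k))"
    using binom_mult[OF p] v_def by simp
  also have "\<dots> \<le> (\<Sum>k\<in>{1..2*n}. if k < v then 1 else 0)"
  proof (rule sum_mono)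
    fix k assume "k \<in> {1..2*n}"
    show "2 * n div p ^ k - 2 * (n div p ^ k) \<le> (if k < v then 1 else 0)"
    proof (cases "k < v")
      case True
      then show ?thesis using two_div_bounds2[of n "p^k"] by simp
    next
      case False
      hence "p ^ v \<le> p ^ k" using p1 by simp
      hence "2 * n < p ^ k" using big by simp
      hence "2 * n div p ^ k = 0" "n div p ^ k = 0" by auto
      then show ?thesis by simp
    qed
  qed
  also have "\<dots> = card ({1..2*n} \<inter> {k. k < v})"
    by (simp add: sum.If_cases)
  also have "\<dots> \<le> card {1..<v}"
    by (rule card_mono) auto
  also have "\<dots> < v" using big p1 \<open>n > 0\<close> by (cases v) auto
  finally show False by simp
qed

lemma binom_le1: "prime (p::nat) \<Longrightarrow> 2 * n < p ^ 2 \<Longrightarrow> multiplicity p (2 * n choose n) \<le> 1"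
proof -
  assume p: "prime p" and lt: "2 * n < p ^ 2"
  show ?thesis
  proof (cases "n = 0")
    case True then show ?thesis by simp
  next
    case False
    hence "p ^ multiplicity p (2 * n choose n) < p ^ 2"
      using binom_pow_le[OF p] lt by (meson le_less_trans not_gr0)
    hence "multiplicity p (2 * n choose n) < 2"
      using power_less_imp_less_exp prime_gt_1_nat[OF p] by blast
    thus ?thesis by simp
  qed
qed

lemma binom_gap: "prime (p::nat) \<Longrightarrow> 5 \<le> n \<Longrightarrow> p \<le> n \<Longrightarrow> 2 * n < 3 * p \<Longrightarrow>
   multiplicity p (2 * n choose n) = 0"
proof -
  assume p: "prime p" and n5: "5 \<le> n" and pn: "p \<le> n" and lt: "2 * n < 3 * p"
  have sq: "2 * n < p ^ 2" using sq_lemma lt n5 by blast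
  have "multiplicity p (2 * n choose n) = (\<Sum>k\<in>{1..2*n}. 2 * n div p ^ k - 2 * (n div p ^ k))"
    using binom_mult[OF p] by simp
  also have "\<dots> = 0"
  proof (rule sum.neutral, rule ballI)
    fix k assume k: "k \<in> {1..2*n}"
    show "2 * n div p ^ k - 2 * (n div p ^ k) = 0"
    proof (cases "k = 1")
      case True
      have a: "2 * n div p = 2" using lt pn by (intro div_nat_eqI) auto
      have b: "n div p = 1" using lt pn by (intro div_nat_eqI) auto
      show ?thesis using a b True by simp
    next
      case False
      hence "k \<ge> 2" using k by simp
      hence "p ^ 2 \<le> p ^ k" using prime_gt_1_nat[OF p] by (simp add: power_increasing)
      hence "2 * n < p ^ k" using sq by simp
      thus ?thesis by simp
    qed
  qed
  finally show ?thesis .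
qed


lemma mult_prod_primes: "finite Q \<Longrightarrow> \<forall>q\<in>Q. prime q \<Longrightarrow> prime (p::nat) \<Longrightarrow>
  multiplicity p (\<Prod>Q) = (if p \<in> Q then 1 else 0)"
  using multiplicity_prod_prime_powers[of Q p "\<lambda>_. 1"] by simp

lemma central_lower: "4 ^ n \<le> (2 * n + 1) * (2 * n choose n)"
proof -
  have "(4::nat) ^ n = 2 ^ (2 * n)" by (simp add: power_mult)
  also have "\<dots> = (\<Sum>k\<le>2*n. 2 * n choose k)" by (simp add: choose_row_sum)
  also have "\<dots> \<le> (\<Sum>k\<le>2*n. 2 * n choose n)"
    by (rule sum_mono) (metis binomial_maximum nonzero_mult_div_cancel_left zero_neq_numeral)
  also have "\<dots> = (2 * n + 1) * (2 * n choose n)" by simp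
  finally show ?thesis .
qed

lemma binom_odd_le: "(2 * m + 1 choose m) \<le> 4 ^ m"
proof -
  have sym: "(2 * m + 1 choose m) = (2 * m + 1 choose (m + 1))"
    using binomial_symmetric[of m "2*m+1"] by simp
  have "2 * (2 * m + 1 choose m) = (\<Sum>k\<in>{m, m+1}. 2 * m + 1 choose k)"
    using sym by simp
  also have "\<dots> \<le> (\<Sum>k\<le>2*m+1. 2 * m + 1 choose k)"
    by (rule sum_mono2) auto
  also have "\<dots> = 2 ^ (2 * m + 1)" by (rule choose_row_sum)
  also have "\<dots> = 2 * 4 ^ m" by (simp add: power_mult)
  finally show ?thesis by simp
qed

lemma primorial_Suc_nonprime: "\<not> prime (Suc n) \<Longrightarrow> primorial (Suc n) = primorial n"
proof -
  assume np: "\<not> prime (Suc n)"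
  have "{p. prime p \<and> p \<le> Suc n} = {p. prime p \<and> p \<le> n}"
    using np le_Suc_eq by auto
  thus ?thesis by (simp add: primorial_def)
qed

lemma finite_primes_le: "finite {p::nat. prime p \<and> p \<le> n}" by auto

lemma primorial_le: "primorial n \<le> 4 ^ n"
proof (induction n rule: less_induct)
  case (less n)
  show ?case
  proof (cases "n \<le> 2")
    case True
    have e0: "{p::nat. prime p \<and> p \<le> 0} = {}" by auto
    have e1: "{p::nat. prime p \<and> p \<le> 1} = {}"
      using prime_ge_2_nat by (metis (mono_tags, lifting) Collect_empty_eq numeral_le_one_iff semiring_norm(69) le_trans)
    have e2: "{p::nat. prime p \<and> p \<le> 2} = {2}"
      using prime_ge_2_nat two_is_prime_nat by (auto intro: antisym)
    have p0: "primorial 0 = 1" unfolding primorial_def e0 by simp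
    have p1: "primorial 1 = 1" unfolding primorial_def e1 by simp
    have p2: "primorial 2 = 2" unfolding primorial_def e2 by simp
    from True have "n = 0 \<or> n = 1 \<or> n = 2" by auto
    then show ?thesis using p0 p1 p2 by (elim disjE) simp_all
  next
    case False
    show ?thesis
    proof (cases "even n")
      case True
      then obtain k where k: "n = Suc k" using False by (cases n) auto
      have "\<not> prime n" using True False prime_odd_nat by fastforce
      hence "primorial n = primorial k" using k primorial_Suc_nonprime by simp
      also have "\<dots> \<le> 4 ^ k" using less.IH k by simp
      also have "\<dots> \<le> 4 ^ n" using k by simp
      finally show ?thesis .
    next
      case odd: False
      then obtain m where m: "n = 2 * m + 1" using oddE by blast
      have m1: "m \<ge> 1" using False m by simp
      define Q where "Q = {p::nat. prime p \<and> m + 1 < p \<and> p \<le> 2 * m + 1}"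
      have split: "{p. prime p \<and> p \<le> n} = {p. prime p \<and> p \<le> m + 1} \<union> Q"
        using m Q_def by auto
      have disj: "{p. prime p \<and> p \<le> m + 1} \<inter> Q = {}" using Q_def by auto
      have finQ: "finite Q" using Q_def by auto
      have primQ: "\<forall>q\<in>Q. prime q" using Q_def by auto
      have "primorial n = primorial (m + 1) * \<Prod>Q"
        unfolding primorial_def split by (rule prod.union_disjoint) (use disj finQ in auto)
      moreover have "primorial (m + 1) \<le> 4 ^ (m + 1)" using less.IH[of "m+1"] m m1 by linarith
      moreover have "\<Prod>Q \<le> 4 ^ m"
      proof -
        have "\<Prod>Q dvd (2 * m + 1 choose m)"
        proof (rule multiplicity_le_imp_dvd)
          show "\<Prod>Q \<noteq> 0" using finQ Q_def by (auto simp: prime_gt_0_nat)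
        next
          fix p :: nat assume p: "prime p"
          show "multiplicity p (\<Prod>Q) \<le> multiplicity p (2 * m + 1 choose m)"
          proof (cases "p \<in> Q")
            case True
            have eq: "fact m * fact (m + 1) * (2 * m + 1 choose m) = (fact (2 * m + 1) :: nat)"
              using binomial_fact_lemma[of m "2*m+1"] by (simp add: algebra_simps)
            have "p \<le> 2 * m + 1" using True Q_def by simp
            hence "p dvd (fact (2 * m + 1) :: nat)" using p prime_dvd_fact_iff by blast
            hence "p dvd fact m * fact (m + 1) * (2 * m + 1 choose m)" using eq by simp
            moreover have "\<not> p \<le> m" "\<not> p \<le> m + 1" using True Q_def by auto
            hence "\<not> p dvd (fact m :: nat)" "\<not> p dvd (fact (m+1) :: nat)"
              using p prime_dvd_fact_iff by blast+
            ultimately have "p dvd (2 * m + 1 choose m)" using p by (simp add: prime_dvd_mult_iff)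
            hence "multiplicity p (2 * m + 1 choose m) \<ge> 1"
              using p by (simp add: prime_multiplicity_gt_zero_iff Suc_le_eq)
            thus ?thesis using mult_prod_primes[OF finQ primQ p] True by simp
          next
            case False
            thus ?thesis using mult_prod_primes[OF finQ primQ p] by simp
          qed
        qed
        hence "\<Prod>Q \<le> (2 * m + 1 choose m)" by (rule dvd_imp_le) simp
        thus ?thesis using binom_odd_le[of m] by simp
      qed
      ultimately have "primorial n \<le> 4 ^ (m + 1) * 4 ^ m" by (simp add: mult_le_mono)
      also have "\<dots> = 4 ^ n" using m by (simp add: power_add[symmetric])
      finally show ?thesis .
    qed
  qed
qed



lemma asym: "\<exists>N::real. \<forall>x\<ge>N. (2*x+1) * (2*x) powr sqrt(2*x) * 4 powr (2*x/3) < 4 powr x"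
proof -
  have "eventually (\<lambda>x::real. (2*x+1) * (2*x) powr sqrt(2*x) * 4 powr (2*x/3) < 4 powr x) at_top"
    by real_asymp
  thus ?thesis by (simp add: eventually_at_top_linorder)
qed

lemma floor_sqrt_ex: "\<exists>t::nat. t^2 \<le> m \<and> m < (t+1)^2 \<and> real t \<le> sqrt (real m)"
proof -
  define t where "t = nat \<lfloor>sqrt (real m)\<rfloor>"
  have t1: "real t \<le> sqrt (real m)" unfolding t_def by simp
  have t2: "sqrt (real m) < real t + 1" unfolding t_def by linarith
  have "real (t^2) \<le> real m"
  proof -
    have "real (t^2) = (real t)^2" by simp
    also have "\<dots> \<le> (sqrt (real m))^2" by (rule power_mono) (use t1 in auto)
    also have "\<dots> = real m" by simp
    finally show ?thesis .
  qed
  moreover have "real m < real ((t+1)^2)"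
  proof -
    have "real m = (sqrt (real m))^2" by simp
    also have "\<dots> < (real t + 1)^2" by (rule power_strict_mono) (use t2 in auto)
    finally show ?thesis by (simp add: algebra_simps)
  qed
  ultimately have "t^2 \<le> m" "m < (t+1)^2" by (simp_all only: of_nat_le_iff of_nat_less_iff)
  thus ?thesis using t1 by blast
qed

lemma le_div3: "3 * x \<le> y \<Longrightarrow> x \<le> y div (3::nat)"
  using div_le_mono[of "3*x" y 3] by simp

lemma bertrand_large: "\<exists>N0::nat. \<forall>n\<ge>N0. \<exists>p. prime p \<and> n < p \<and> p \<le> 2 * n"
proof -
  obtain N :: real where N: "\<forall>x\<ge>N. (2*x+1) * (2*x) powr sqrt(2*x) * 4 powr (2*x/3) < 4 powr x"
    using asym by blast
  have "\<forall>n\<ge>max 5 (nat \<lceil>N\<rceil>). \<exists>p. prime p \<and> n < p \<and> p \<le> 2 * n"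
  proof (intro allI impI, rule ccontr)
    fix n :: nat
    assume n: "n \<ge> max 5 (nat \<lceil>N\<rceil>)" and np: "\<nexists>p. prime p \<and> n < p \<and> p \<le> 2 * n"
    have n5: "n \<ge> 5" using n by simp
    have nN: "real n \<ge> N" using n by linarith
    define C where "C = 2 * n choose n"
    have C0: "C \<noteq> 0" unfolding C_def by simp
    define PF where "PF = prime_factors C"
    define v where "v = (\<lambda>p. multiplicity p C)"
    have finPF: "finite PF" unfolding PF_def by simp
    have Ceq: "C = (\<Prod>p\<in>PF. p ^ v p)"
      using prod_prime_factors[OF C0] unfolding PF_def v_def by simp
    have PFprops: "prime p \<and> v p \<ge> 1 \<and> p ^ v p \<le> 2 * n \<and> 3 * p \<le> 2 * n" if "p \<in> PF" for p
    proof -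
      have p: "prime p" using that PF_def by auto
      have v1: "v p \<ge> 1" using that PF_def v_def C0 p
        by (simp add: prime_factors_multiplicity Suc_le_eq)
      have pv: "p ^ v p \<le> 2 * n" using binom_pow_le[OF p, of n] n5 v_def C_def by simp
      have "p ^ 1 \<le> p ^ v p" using v1 prime_gt_0_nat[OF p] by (intro power_increasing) auto
      hence "p \<le> p ^ v p" by simp
      hence "p \<le> 2 * n" using pv by simp
      hence pn: "p \<le> n" using np p not_less by blast
      have "3 * p \<le> 2 * n"
      proof (rule ccontr)
        assume "\<not> 3 * p \<le> 2 * n"
        hence "2 * n < 3 * p" by simp
        hence "v p = 0" using binom_gap[OF p n5 pn] v_def C_def by simp
        thus False using v1 by simp
      qed
      thus ?thesis using p v1 pv by simp
    qed
    obtain t :: nat where t: "t^2 \<le> 2 * n" "2 * n < (t+1)^2" "real t \<le> sqrt (real (2 * n))"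
      using floor_sqrt_ex by blast
    define S1 where "S1 = {p\<in>PF. p \<le> t}"
    define S2 where "S2 = {p\<in>PF. t < p}"
    have "PF = S1 \<union> S2" "S1 \<inter> S2 = {}" unfolding S1_def S2_def by auto
    hence Csplit: "C = (\<Prod>p\<in>S1. p ^ v p) * (\<Prod>p\<in>S2. p ^ v p)"
      using Ceq finPF by (simp add: prod.union_disjoint)
    have b1: "(\<Prod>p\<in>S1. p ^ v p) \<le> (2 * n) ^ t"
    proof -
      have "(\<Prod>p\<in>S1. p ^ v p) \<le> (\<Prod>p\<in>S1. 2 * n)"
        by (rule prod_mono) (use PFprops S1_def in auto)
      also have "\<dots> = (2 * n) ^ card S1" by simp
      also have "\<dots> \<le> (2 * n) ^ t"
      proof (rule power_increasing)
        have "S1 \<subseteq> {1..t}" using PFprops S1_def prime_ge_1_nat by auto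
        hence "card S1 \<le> card {1..t}" by (rule card_mono[rotated]) simp
        thus "card S1 \<le> t" by simp
      qed (use n5 in simp)
      finally show ?thesis .
    qed
    have b2: "(\<Prod>p\<in>S2. p ^ v p) \<le> 4 ^ (2 * n div 3)"
    proof -
      have eq: "(\<Prod>p\<in>S2. p ^ v p) = (\<Prod>p\<in>S2. p)"
      proof (rule prod.cong)
        fix p assume pS: "p \<in> S2"
        hence p: "prime p" and tp: "t < p" and v1: "v p \<ge> 1" using S2_def PFprops by auto
        have "(t+1)^2 \<le> p^2" using tp by (simp add: power_mono)
        hence "2 * n < p ^ 2" using t(2) by linarith
        hence "v p \<le> 1" using binom_le1[OF p] v_def C_def by simp
        hence "v p = 1" using v1 by simp
        thus "p ^ v p = p" by simp
      qed simp
      have "(\<Prod>p\<in>S2. p) dvd primorial (2 * n div 3)"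
        unfolding primorial_def
        by (rule prod_dvd_prod_subset) (use PFprops S2_def le_div3 in auto)
      hence "(\<Prod>p\<in>S2. p) \<le> primorial (2 * n div 3)"
        by (rule dvd_imp_le) (auto simp: primorial_def prime_gt_0_nat)
      also have "\<dots> \<le> 4 ^ (2 * n div 3)" by (rule primorial_le)
      finally show ?thesis using eq by simp
    qed
    have "4 ^ n \<le> (2 * n + 1) * C" using central_lower C_def by simp
    also have "\<dots> \<le> (2 * n + 1) * ((2 * n) ^ t * 4 ^ (2 * n div 3))"
    proof -
      have "C \<le> (2 * n) ^ t * 4 ^ (2 * n div 3)" unfolding Csplit by (rule mult_le_mono[OF b1 b2])
      thus ?thesis by (rule mult_le_mono2)
    qed
    finally have ineq: "(4::nat) ^ n \<le> (2 * n + 1) * ((2 * n) ^ t * 4 ^ (2 * n div 3))" .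
    define x where "x = real n"
    have "(4::real) powr x = real (4 ^ n)" unfolding x_def by (simp add: powr_realpow)
    also have "\<dots> \<le> real ((2 * n + 1) * ((2 * n) ^ t * 4 ^ (2 * n div 3)))"
      using ineq by (simp only: of_nat_le_iff)
    also have "\<dots> = (2*x+1) * ((2*x) ^ t * 4 ^ (2 * n div 3))" unfolding x_def by (simp add: algebra_simps)
    also have "\<dots> \<le> (2*x+1) * ((2*x) powr sqrt(2*x) * 4 powr (2*x/3))"
    proof -
      have x1: "2 * x \<ge> 1" unfolding x_def using n5 by simp
      have "(2*x) ^ t = (2*x) powr (real t)" using x1 by (simp add: powr_realpow)
      also have "\<dots> \<le> (2*x) powr sqrt(2*x)"
        by (rule powr_mono) (use t(3) x1 in \<open>auto simp: x_def\<close>)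
      finally have A: "(2*x) ^ t \<le> (2*x) powr sqrt(2*x)" .
      have "(4::real) ^ (2 * n div 3) = 4 powr (real (2 * n div 3))" by (simp add: powr_realpow)
      also have "\<dots> \<le> 4 powr (2*x/3)"
        using of_nat_div_le_of_nat[of "2*n" 3] by (intro powr_mono) (auto simp: x_def)
      finally have B: "(4::real) ^ (2 * n div 3) \<le> 4 powr (2*x/3)" .
      have "(2*x) ^ t * 4 ^ (2 * n div 3) \<le> (2*x) powr sqrt(2*x) * 4 powr (2*x/3)"
        using A B by (intro mult_mono) auto
      thus ?thesis using x1 by (intro mult_left_mono) auto
    qed
    finally have "4 powr x \<le> (2*x+1) * (2*x) powr sqrt(2*x) * 4 powr (2*x/3)"
      by (simp add: mult.assoc)
    moreover have "x \<ge> N" using nN x_def by simp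
    ultimately show False using N not_less by blast
  qed
  thus ?thesis by blast
qed



definition gpart :: "seq_kind \<Rightarrow> nat \<Rightarrow> nat" where
  "gpart k n = (case k of Fact \<Rightarrow> fact n | DFact \<Rightarrow> dfact n | LcmSeq \<Rightarrow> lcm_upto n
     | Primorial \<Rightarrow> primorial n | PrimePrimorial \<Rightarrow> primorial (nth_prime n))"

definition reach :: "seq_kind \<Rightarrow> nat \<Rightarrow> nat" where
  "reach k n = (case k of DFact \<Rightarrow> (if odd n then n else n div 2)
     | PrimePrimorial \<Rightarrow> nth_prime n | _ \<Rightarrow> n)"

definition marg :: "seq_kind \<Rightarrow> nat \<Rightarrow> nat" where
  "marg k n = (case k of PrimePrimorial \<Rightarrow> nth_prime n | _ \<Rightarrow> n)"

lemma Hseq_eq: "Hseq k A n = A ^ marg k n * gpart k n"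
  by (cases k) (simp_all add: marg_def gpart_def)

lemma dfact_pos: "dfact n > 0"
  by (induction n rule: dfact.induct) simp_all

lemma dfact_dvd_fact: "dfact n dvd fact n"
proof (induction n rule: dfact.induct)
  case (3 n)
  have f: "(fact (Suc (Suc n)) :: nat) = Suc (Suc n) * (Suc n * fact n)"
    by (simp only: fact_Suc of_nat_id)
  have "dfact n dvd Suc n * fact n" using 3 by (rule dvd_mult)
  hence "Suc (Suc n) * dfact n dvd Suc (Suc n) * (Suc n * fact n)" by (rule mult_dvd_mono[OF dvd_refl])
  thus ?case unfolding f by simp
qed simp_all

lemma dfact_even: "dfact (2 * k) = 2 ^ k * fact k"
proof (induction k)
  case 0 then show ?case by simp
next
  case (Suc k)
  have "dfact (2 * Suc k) = dfact (Suc (Suc (2 * k)))" by simp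
  also have "\<dots> = Suc (Suc (2 * k)) * dfact (2 * k)" by simp
  also have "\<dots> = 2 ^ Suc k * fact (Suc k)" using Suc by (simp add: fact_Suc algebra_simps del: of_nat_Suc)
  finally show ?case .
qed

lemma dfact_odd_dvd: "odd p \<Longrightarrow> odd n \<Longrightarrow> p \<le> n \<Longrightarrow> p dvd dfact n"
proof (induction n rule: dfact.induct)
  case 1 then show ?case by simp
next
  case 2
  have "p > 0" using 2 odd_pos by blast
  hence "p = 1" using 2 by simp
  thus ?case by simp
next
  case (3 n)
  show ?case
  proof (cases "p = Suc (Suc n)")
    case True
    have "dfact (Suc (Suc n)) = Suc (Suc n) * dfact n" by simp
    thus ?thesis using True by (metis dvd_triv_left)
  next
    case False
    have "p \<noteq> Suc n" using 3 by auto
    hence "p \<le> n" using 3 False by linarith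
    hence "p dvd dfact n" using 3 by simp
    hence "p dvd Suc (Suc n) * dfact n" by (rule dvd_mult)
    thus ?thesis by (simp only: dfact.simps)
  qed
qed

lemma lcm_upto_dvd_fact: "lcm_upto n dvd fact n"
  unfolding lcm_upto_def by (rule Lcm_least) (auto intro: dvd_fact)

lemma lcm_upto_pos: "lcm_upto n > 0"
proof -
  have "lcm_upto n dvd fact n" by (rule lcm_upto_dvd_fact)
  moreover have "(fact n :: nat) \<noteq> 0" by simp
  ultimately show ?thesis by (metis dvd_0_left_iff gr0I)
qed

lemma primorial_pos: "primorial n > 0"
  unfolding primorial_def by (auto simp: prime_gt_0_nat)

lemma gpart_pos: "gpart k n > 0"
  by (cases k) (simp_all add: gpart_def dfact_pos lcm_upto_pos primorial_pos)

lemma mult_primorial: "prime p \<Longrightarrow> multiplicity p (primorial n) = (if p \<le> n then 1 else 0)"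
proof -
  assume p: "prime p"
  have fin: "finite {p::nat. prime p \<and> p \<le> n}" by simp
  have pr: "\<forall>q\<in>{p::nat. prime p \<and> p \<le> n}. prime q" by simp
  have "multiplicity p (\<Prod>{p::nat. prime p \<and> p \<le> n}) = (if p \<in> {p::nat. prime p \<and> p \<le> n} then 1 else 0)"
    by (rule mult_prod_primes[OF fin pr p])
  thus ?thesis unfolding primorial_def using p by simp
qed

lemma fact_mult_le1: "prime p \<Longrightarrow> n < 2 * p \<Longrightarrow> multiplicity p (fact n :: nat) \<le> 1"
proof -
  assume p: "prime p" and n: "n < 2 * p"
  have p2: "p \<ge> 2" using prime_ge_2_nat[OF p] .
  have "multiplicity p (fact n :: nat) = (\<Sum>k\<in>{1..n}. n div p ^ k)" by (rule legendre[OF p])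
  also have "\<dots> \<le> (\<Sum>k\<in>{1..n}. if k = 1 then 1 else 0)"
  proof (rule sum_mono)
    fix k assume k: "k \<in> {1..n}"
    show "n div p ^ k \<le> (if k = 1 then 1 else 0)"
    proof (cases "k = 1")
      case True
      have "n div p < 2" using less_mult_imp_div_less[of n 2 p] n by (simp add: mult.commute)
      then show ?thesis using True by simp
    next
      case False
      hence "k \<ge> 2" using k by simp
      hence "p ^ 2 \<le> p ^ k" using p2 by (simp add: power_increasing)
      moreover have "2 * p \<le> p ^ 2" using p2 by (simp add: power2_eq_square)
      ultimately have "n < p ^ k" using n by linarith
      then show ?thesis by simp
    qed
  qed
  also have "\<dots> \<le> 1" by (simp add: sum.If_cases)
  finally show ?thesis .
qed

lemma mult_ge1: "prime (p::nat) \<Longrightarrow> x \<noteq> 0 \<Longrightarrow> p dvd x \<Longrightarrow> multiplicity p x \<ge> 1"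
  by (simp add: prime_multiplicity_gt_zero_iff Suc_le_eq)

lemma key_val: "prime p \<Longrightarrow> p > 2 \<Longrightarrow> reach k n < 2 * p \<Longrightarrow>
   multiplicity p (gpart k n) \<le> 1 \<and> (p \<le> reach k n \<longrightarrow> multiplicity p (gpart k n) \<ge> 1)"
proof -
  assume p: "prime p" and p2: "p > 2" and rl: "reach k n < 2 * p"
  show ?thesis
  proof (cases k)
    case Fact
    have g: "gpart k n = fact n" "reach k n = n" using Fact by (simp_all add: gpart_def reach_def)
    have a: "multiplicity p (fact n :: nat) \<le> 1" using fact_mult_le1[OF p] rl g by simp
    have b: "multiplicity p (fact n :: nat) \<ge> 1" if "p \<le> n"
    proof (rule mult_ge1[OF p])
      show "(fact n :: nat) \<noteq> 0" by simp
      show "p dvd fact n" using prime_dvd_fact_iff[OF p] that by blast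
    qed
    show ?thesis unfolding g using a b by blast
  next
    case LcmSeq
    have g: "gpart k n = lcm_upto n" "reach k n = n" using LcmSeq by (simp_all add: gpart_def reach_def)
    have nz: "(fact n :: nat) \<noteq> 0" by simp
    have "multiplicity p (lcm_upto n) \<le> multiplicity p (fact n :: nat)"
      by (rule dvd_imp_multiplicity_le[OF lcm_upto_dvd_fact nz])
    moreover have "multiplicity p (fact n :: nat) \<le> 1" using rl g fact_mult_le1[OF p] by simp
    ultimately have a: "multiplicity p (lcm_upto n) \<le> 1" by linarith
    have b: "multiplicity p (lcm_upto n) \<ge> 1" if "p \<le> n"
    proof (rule mult_ge1[OF p])
      show "lcm_upto n \<noteq> 0" using lcm_upto_pos[of n] by simp
      have "p \<in> {1..n}" using that prime_gt_0_nat[OF p] by simp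
      thus "p dvd lcm_upto n" unfolding lcm_upto_def by (rule dvd_Lcm)
    qed
    show ?thesis unfolding g using a b by blast
  next
    case Primorial
    have g: "gpart k n = primorial n" "reach k n = n" using Primorial by (simp_all add: gpart_def reach_def)
    show ?thesis unfolding g mult_primorial[OF p] by simp
  next
    case PrimePrimorial
    have g: "gpart k n = primorial (nth_prime n)" "reach k n = nth_prime n"
      using PrimePrimorial by (simp_all add: gpart_def reach_def)
    show ?thesis unfolding g mult_primorial[OF p] by simp
  next
    case DFact
    have op: "odd p" using p p2 prime_odd_nat by blast
    show ?thesis
    proof (cases "odd n")
      case True
      have g: "gpart k n = dfact n" "reach k n = n" using DFact True by (simp_all add: gpart_def reach_def)
      have nz: "(fact n :: nat) \<noteq> 0" by simp
      have "multiplicity p (dfact n) \<le> multiplicity p (fact n :: nat)"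
        by (rule dvd_imp_multiplicity_le[OF dfact_dvd_fact nz])
      moreover have "multiplicity p (fact n :: nat) \<le> 1" using rl g fact_mult_le1[OF p] by simp
      ultimately have a: "multiplicity p (dfact n) \<le> 1" by linarith
      have b: "multiplicity p (dfact n) \<ge> 1" if "p \<le> n"
      proof (rule mult_ge1[OF p])
        show "dfact n \<noteq> 0" using dfact_pos[of n] by simp
        show "p dvd dfact n" using dfact_odd_dvd op True that by blast
      qed
      show ?thesis unfolding g using a b by blast
    next
      case False
      then obtain j where j: "n = 2 * j" by blast
      have g: "gpart k n = dfact n" "reach k n = j" using DFact False j by (simp_all add: gpart_def reach_def)
      have nd: "\<not> p dvd 2 ^ j"
      proof
        assume "p dvd 2 ^ j"
        hence "p dvd 2" using p prime_dvd_power by blast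
        hence "p \<le> 2" by (rule dvd_imp_le) simp
        thus False using p2 by simp
      qed
      have "dfact n = 2 ^ j * fact j" using j dfact_even by simp
      hence e: "multiplicity p (dfact n) = multiplicity p (fact j :: nat)"
        using multiplicity_prime_elem_times_other[of p "2^j" "fact j"] p nd by simp
      have a: "multiplicity p (fact j :: nat) \<le> 1" using rl g fact_mult_le1[OF p] by simp
      have b: "multiplicity p (fact j :: nat) \<ge> 1" if "p \<le> j"
      proof (rule mult_ge1[OF p])
        show "(fact j :: nat) \<noteq> 0" by simp
        show "p dvd fact j" using prime_dvd_fact_iff[OF p] that by blast
      qed
      show ?thesis unfolding g e using a b by blast
    qed
  qed
qed

lemma n_le_reach: "n \<le> 2 * reach k n + 1"
proof (cases k)
  case PrimePrimorial
  have "infinite {p::nat. prime p}" by (rule primes_infinite)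
  hence "n - 1 \<le> nth_prime n" unfolding nth_prime_def by (rule le_enumerate)
  then show ?thesis using PrimePrimorial by (simp add: reach_def)
qed (auto simp: reach_def)



lemma Hseq_pos: "A > 0 \<Longrightarrow> Hseq k A n > 0"
  unfolding Hseq_eq using gpart_pos by simp

lemma mult_Hseq: "prime p \<Longrightarrow> 0 < A \<Longrightarrow> A < p \<Longrightarrow>
   multiplicity p (Hseq k A n) = multiplicity p (gpart k n)"
proof -
  assume p: "prime p" and A0: "0 < A" and Ap: "A < p"
  have nd: "\<not> p dvd A ^ marg k n"
  proof
    assume "p dvd A ^ marg k n"
    hence "p dvd A" using p prime_dvd_power by blast
    hence "p \<le> A" using A0 by (rule dvd_imp_le)
    thus False using Ap by simp
  qed
  show ?thesis unfolding Hseq_eq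
    using multiplicity_prime_elem_times_other[of p "A ^ marg k n" "gpart k n"] p nd by simp
qed

lemma reach_bounded:
  fixes r d :: nat and A :: "nat \<Rightarrow> nat" and K :: "nat \<Rightarrow> seq_kind"
  assumes r1: "r \<ge> 1" and dr: "d > r" and Apos: "\<forall>i<r. A i > 0"
  shows "\<exists>N1. \<forall>x::int. \<forall>ns::nat list. length ns = r \<longrightarrow>
           x ^ d = (\<Prod>i<r. int (Hseq (K i) (A i) (ns ! i))) \<longrightarrow> (\<forall>i<r. reach (K i) (ns ! i) < N1)"
proof -
  obtain N0 :: nat where N0: "\<forall>n\<ge>N0. \<exists>p. prime p \<and> n < p \<and> p \<le> 2 * n"
    using bertrand_large by blast
  define Bd where "Bd = (\<Sum>i<r. A i) + 3"
  define N1 where "N1 = 2 * (N0 + Bd) + 2"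
  have "\<forall>x::int. \<forall>ns::nat list. length ns = r \<longrightarrow>
           x ^ d = (\<Prod>i<r. int (Hseq (K i) (A i) (ns ! i))) \<longrightarrow> (\<forall>i<r. reach (K i) (ns ! i) < N1)"
  proof (rule allI, rule allI, rule impI, rule impI, rule ccontr)
    fix x :: int and ns :: "nat list"
    assume len: "length ns = r" and eq: "x ^ d = (\<Prod>i<r. int (Hseq (K i) (A i) (ns ! i)))"
      and nb: "\<not> (\<forall>i<r. reach (K i) (ns ! i) < N1)"
    define R where "R = (\<lambda>i. reach (K i) (ns ! i))"
    define E where "E = Max (R ` {..<r})"
    have finR: "finite (R ` {..<r})" by simp
    have "0 \<in> {..<r}" using r1 by simp
    hence neR: "R ` {..<r} \<noteq> {}" by blast
    obtain i0 where i0: "i0 < r" "R i0 = E"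
      using Max_in[OF finR neR] unfolding E_def by auto
    have RleE: "R i \<le> E" if "i < r" for i
      unfolding E_def using finR that by (intro Max_ge) auto
    have EN1: "E \<ge> N1" using nb RleE R_def by (meson le_trans not_less)
    define h where "h = E div 2"
    have hh: "N0 + Bd + 1 \<le> h" using EN1 unfolding h_def N1_def by presburger
    hence hN0: "h \<ge> N0" "h \<ge> Bd" by linarith+
    obtain p where p: "prime p" "h < p" "p \<le> 2 * h" using N0 hN0 by blast
    have pE: "p \<le> E" using p(3) unfolding h_def by presburger
    have Ep: "E < 2 * p" using p(2) unfolding h_def by presburger
    have pBd: "p > Bd" using p hN0 by linarith
    have p2: "p > 2" using pBd Bd_def by linarith
    have Ap: "A i < p" if "i < r" for i
    proof -
      have "A i \<le> (\<Sum>i<r. A i)" using that by (intro member_le_sum) auto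
      thus ?thesis using pBd Bd_def by linarith
    qed
    define P where "P = (\<Prod>i<r. Hseq (K i) (A i) (ns ! i))"
    have P0: "P \<noteq> 0" unfolding P_def using Hseq_pos Apos by auto
    define y where "y = nat \<bar>x\<bar>"
    have "int (y ^ d) = \<bar>x\<bar> ^ d" unfolding y_def by simp
    also have "\<dots> = \<bar>x ^ d\<bar>" by (simp add: power_abs)
    also have "\<dots> = int P" unfolding eq P_def of_nat_prod by (simp add: abs_prod)
    finally have yP: "y ^ d = P" by (simp only: of_nat_eq_iff)
    have y0: "y \<noteq> 0" using yP P0 dr by (cases d) auto
    have "multiplicity p P = (\<Sum>i<r. multiplicity p (Hseq (K i) (A i) (ns ! i)))"
      unfolding P_def
      by (rule prime_elem_multiplicity_prod_distrib) (use p Hseq_pos Apos in \<open>auto simp: less_not_refl2\<close>)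
    also have "\<dots> = (\<Sum>i<r. multiplicity p (gpart (K i) (ns ! i)))"
      by (rule sum.cong) (use mult_Hseq p Apos Ap in auto)
    finally have S: "multiplicity p P = (\<Sum>i<r. multiplicity p (gpart (K i) (ns ! i)))" .
    have kv: "multiplicity p (gpart (K i) (ns ! i)) \<le> 1 \<and>
        (p \<le> R i \<longrightarrow> multiplicity p (gpart (K i) (ns ! i)) \<ge> 1)" if "i < r" for i
      using key_val[OF p(1) p2] RleE[OF that] Ep R_def by fastforce
    have up: "multiplicity p P \<le> r"
    proof -
      have "(\<Sum>i<r. multiplicity p (gpart (K i) (ns ! i))) \<le> (\<Sum>i<r. 1)"
        by (rule sum_mono) (use kv in auto)
      thus ?thesis using S by simp
    qed
    have lo: "multiplicity p P \<ge> 1"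
    proof -
      have "1 \<le> multiplicity p (gpart (K i0) (ns ! i0))" using kv[OF i0(1)] i0 pE by simp
      also have "\<dots> \<le> (\<Sum>i<r. multiplicity p (gpart (K i) (ns ! i)))"
        using i0 by (intro member_le_sum) auto
      finally show ?thesis using S by simp
    qed
    have "multiplicity p P = d * multiplicity p y"
      unfolding yP[symmetric] using p y0 by (simp add: prime_elem_multiplicity_power_distrib)
    thus False using up lo dr
      by (metis Suc_le_eq mult_is_0 less_le_trans nat_mult_le_cancel_disj not_less mult.commute
          mult_le_mono2 nat_mult_1_right not_less_eq_eq)
  qed
  thus ?thesis by blast
qed



theorem theorem6:
  fixes r d :: nat and A :: "nat \<Rightarrow> nat" and K :: "nat \<Rightarrow> seq_kind"
  assumes "r \<ge> 1" and "d > r" and "\<forall>i<r. A i > 0"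
  shows "finite {(x::int, ns::nat list). length ns = r \<and> (\<forall>i<r. ns ! i > 0) \<and>
           x ^ d = (\<Prod>i<r. int (Hseq (K i) (A i) (ns ! i)))}"
proof -
  obtain N1 where N1: "\<forall>x::int. \<forall>ns::nat list. length ns = r \<longrightarrow>
           x ^ d = (\<Prod>i<r. int (Hseq (K i) (A i) (ns ! i))) \<longrightarrow> (\<forall>i<r. reach (K i) (ns ! i) < N1)"
    using reach_bounded[OF assms] by blast
  define NS where "NS = {ns. set ns \<subseteq> {..2*N1+1} \<and> length ns = r}"
  have finNS: "finite NS" unfolding NS_def by (rule finite_lists_length_eq) simp
  define M where "M = (\<Sum>ns\<in>NS. \<Prod>i<r. Hseq (K i) (A i) (ns ! i))"
  have sub: "{(x::int, ns::nat list). length ns = r \<and> (\<forall>i<r. ns ! i > 0) \<and>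
           x ^ d = (\<Prod>i<r. int (Hseq (K i) (A i) (ns ! i)))} \<subseteq> {-int M..int M} \<times> NS"
  proof
    fix z assume "z \<in> {(x::int, ns::nat list). length ns = r \<and> (\<forall>i<r. ns ! i > 0) \<and>
           x ^ d = (\<Prod>i<r. int (Hseq (K i) (A i) (ns ! i)))}"
    then obtain x ns where z: "z = (x, ns)" and len: "length ns = r"
      and eq: "x ^ d = (\<Prod>i<r. int (Hseq (K i) (A i) (ns ! i)))" by blast
    have rb: "\<forall>i<r. reach (K i) (ns ! i) < N1" using N1 len eq by blast
    have "set ns \<subseteq> {..2*N1+1}"
    proof
      fix y assume "y \<in> set ns"
      then obtain i where i: "i < r" "y = ns ! i" using len by (auto simp: in_set_conv_nth)
      have "y \<le> 2 * reach (K i) (ns ! i) + 1" using i n_le_reach by simp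
      thus "y \<in> {..2*N1+1}" using rb i by fastforce
    qed
    hence nsNS: "ns \<in> NS" unfolding NS_def using len by simp
    define P where "P = (\<Prod>i<r. Hseq (K i) (A i) (ns ! i))"
    have "\<bar>x\<bar> \<le> \<bar>x\<bar> ^ d"
    proof (cases "x = 0")
      case True then show ?thesis by simp
    next
      case False
      hence "\<bar>x\<bar> ^ 1 \<le> \<bar>x\<bar> ^ d" using assms(1,2) by (intro power_increasing) auto
      thus ?thesis by simp
    qed
    also have "\<dots> = \<bar>x ^ d\<bar>" by (simp add: power_abs)
    also have "\<dots> = int P" unfolding eq P_def of_nat_prod by (simp add: abs_prod)
    also have "\<dots> \<le> int M" unfolding M_def P_def using nsNS finNS
      by (simp only: of_nat_le_iff) (rule member_le_sum, auto)
    finally have "\<bar>x\<bar> \<le> int M" .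
    thus "z \<in> {-int M..int M} \<times> NS" using z nsNS by auto
  qed
  show ?thesis by (rule finite_subset[OF sub]) (use finNS in simp)
qed

end
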